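(* Let $\mathscr{A}$ be a closed set of games and $(\mathcal{Q},\mathcal{P})$ a reduced bipartite monoid. The following are equivalent: (i) $(\mathcal{Q},\mathcal{P})\cong\mathcal{Q}(\mathscr{A})$; (ii) there exists a surjective monoid homomorphism $\Phi:\mathscr{A}\to\mathcal{Q}$ (with respect to disjunctive sum on $\mathscr{A}$) such that for every $G\in\mathscr{A}$: $\Phi(G)\in\mathcal{P}$ if and only if $G\neq0$ and $\Phi(G')\notin\mathcal{P}$ for every option $G'$ of $G$.
   Context: Games are finite, loopfree impartial games identified with the finite set of their options ($0=\{\}$); disjunctive sum $G+H=\{G'+H\}\cup\{G+H'\}$, making any set of games closed under $+$ and containing $0$ a commutative monoid. Misère outcome: $o^-(G)=\mathscr{P}$ iff $G\neq0$ and every option has outcome $\mathscr{N}$; otherwise $\mathscr{N}$. A set of games is closed if it contains all options of its members and is closed under $+$. For closed $\mathscr{A}$: $G\equiv_\mathscr{A}H$ iff $o^-(G+X)=o^-(H+X)$ for all $X\in\mathscr{A}$; $\mathcal{Q}(\mathscr{A})$ is the bipartite monoid of $\equiv_\mathscr{A}$-classes ($[G][H]=[G+H]$) with distinguished subset the classes of misère $\mathscr{P}$-positions. A bipartite monoid is a pair (commutative monoid, subset); isomorphism means monoid isomorphism carrying the subset onto the subset. $(\mathcal{Q},\mathcal{P})$ is reduced if for any distinct $x,y\in\mathcal{Q}$ there is $z$ with exactly one of $xz,yz$ in $\mathcal{P}$. *)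

theory Defs
  imports Main "HOL-Library.FSet"
begin

text \<open>Finite loopfree impartial games, identified with the finite set of their options
  (a game is its fset of options; equality is extensional).\<close>
datatype game = Game (opts: "game fset")

lemma opts_size_less: "G' |\<in>| opts G \<Longrightarrow> size G' < size G"
proof (cases G)
  case (Game S)
  assume "G' |\<in>| opts G"
  then have m: "G' \<in> fset S" using Game by simp
  have "Suc (size G') \<le> (\<Sum>x\<in>fset S. Suc (size x))"
    using m by (intro member_le_sum[where f="\<lambda>x. Suc (size x)", simplified]) auto
  then show ?thesis using Game by simp
qed

instantiation game :: zero
begin
definition zero_game :: game where "zero_game = Game {||}"
instance ..
end

function gsum :: "game \<Rightarrow> game \<Rightarrow> game" where
  "gsum G H = Game ((\<lambda>G'. gsum G' H) |`| opts G |\<union>| (\<lambda>H'. gsum G H') |`| opts H)"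
  by auto
termination
  by (relation "measure (\<lambda>(G, H). size G + size H)") (auto dest: opts_size_less)

instantiation game :: plus
begin
definition plus_game :: "game \<Rightarrow> game \<Rightarrow> game" where "plus_game = gsum"
instance ..
end

text \<open>Misere outcome: misere_P G holds iff the outcome of G is P
  (G is nonzero and every option has outcome N); otherwise the outcome is N.\<close>
function misere_P :: "game \<Rightarrow> bool" where
  "misere_P G = (opts G \<noteq> {||} \<and> (\<forall>G'\<in>fset (opts G). \<not> misere_P G'))"
  by auto
termination
  by (relation "measure size") (auto dest: opts_size_less)

definition closed_games :: "game set \<Rightarrow> bool" where
  "closed_games A \<longleftrightarrow> (\<forall>G\<in>A. \<forall>G'\<in>fset (opts G). G' \<in> A) \<and> (\<forall>G\<in>A. \<forall>H\<in>A. G + H \<in> A)"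

definition equiv_mod :: "game set \<Rightarrow> game \<Rightarrow> game \<Rightarrow> bool" where
  "equiv_mod A G H \<longleftrightarrow> (\<forall>X\<in>A. misere_P (G + X) = misere_P (H + X))"

definition mq_class :: "game set \<Rightarrow> game \<Rightarrow> game set" where
  "mq_class A G = {H \<in> A. equiv_mod A G H}"

definition mq_carrier :: "game set \<Rightarrow> game set set" where
  "mq_carrier A = mq_class A ` A"

definition mq_mult :: "game set \<Rightarrow> game set \<Rightarrow> game set \<Rightarrow> game set" where
  "mq_mult A c d = mq_class A ((SOME G. G \<in> c) + (SOME H. H \<in> d))"

definition mq_one :: "game set \<Rightarrow> game set" where
  "mq_one A = mq_class A 0"

definition mq_P :: "game set \<Rightarrow> game set set" where
  "mq_P A = mq_class A ` {G \<in> A. misere_P G}"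

text \<open>Abstract bipartite monoids are (Q,P) with Q a commutative monoid type and P a subset.\<close>
definition reduced_bipartite :: "('q::comm_monoid_add) set \<Rightarrow> bool" where
  "reduced_bipartite P \<longleftrightarrow> (\<forall>x y. x \<noteq> y \<longrightarrow> (\<exists>z. (x + z \<in> P) \<noteq> (y + z \<in> P)))"

definition iso_to_mq :: "('q::comm_monoid_add) set \<Rightarrow> game set \<Rightarrow> bool" where
  "iso_to_mq P A \<longleftrightarrow> (\<exists>f :: 'q \<Rightarrow> game set.
      bij_betw f UNIV (mq_carrier A) \<and>
      f 0 = mq_one A \<and>
      (\<forall>x y. f (x + y) = mq_mult A (f x) (f y)) \<and>
      f ` P = mq_P A)"

end

theory Submission
  imports Defs
begin
declare gsum.simps[simp del] misere_P.simps[simp del]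

lemma opts_gsum: "opts (G + H) = (\<lambda>G'. G' + H) |`| opts G |\<union>| (\<lambda>H'. G + H') |`| opts H"
  unfolding plus_game_def by (subst gsum.simps) simp

lemma game_eqI: "opts G = opts H \<Longrightarrow> G = H"
  by (metis game.collapse)

lemma gsum_0: "G + 0 = (G::game)"
proof (induction "size G" arbitrary: G rule: less_induct)
  case less
  have "opts (G + 0) = (\<lambda>G'. G' + 0) |`| opts G" by (simp add: opts_gsum zero_game_def)
  also have "\<dots> = opts G" using less opts_size_less by (force simp: fimage_iff)
  finally show ?case by (rule game_eqI)
qed

lemma gsum_comm: "G + H = H + (G::game)"
proof (induction "size G + size H" arbitrary: G H rule: less_induct)
  case less
  have "(\<lambda>G'. G' + H) |`| opts G = (\<lambda>G'. H + G') |`| opts G"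
    using less opts_size_less by (intro fset.map_cong0) force
  moreover have "(\<lambda>H'. G + H') |`| opts H = (\<lambda>H'. H' + G) |`| opts H"
    using less opts_size_less by (intro fset.map_cong0) force
  ultimately show ?case by (intro game_eqI) (auto simp: opts_gsum)
qed

lemma gsum_assoc: "(G + H) + K = G + (H + (K::game))"
proof (induction "size G + size H + size K" arbitrary: G H K rule: less_induct)
  case less
  have a: "(\<lambda>G'. (G' + H) + K) |`| opts G = (\<lambda>G'. G' + (H + K)) |`| opts G"
    using less opts_size_less by (intro fset.map_cong0) force
  have b: "(\<lambda>H'. (G + H') + K) |`| opts H = (\<lambda>H'. G + (H' + K)) |`| opts H"
    using less opts_size_less by (intro fset.map_cong0) force
  have c: "(\<lambda>K'. (G + H) + K') |`| opts K = (\<lambda>K'. G + (H + K')) |`| opts K"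
    using less opts_size_less by (intro fset.map_cong0) force
  show ?case using a b c by (intro game_eqI) (auto simp: opts_gsum fimage_funion fimage_fimage comp_def)
qed

lemma zero_iff: "(G \<noteq> 0) = (opts G \<noteq> {||})"
  by (metis game.collapse game.sel zero_game_def)

lemma misere_P_eq: "misere_P G = (G \<noteq> 0 \<and> (\<forall>G'\<in>fset (opts G). \<not> misere_P G'))"
  by (subst misere_P.simps) (simp add: zero_iff)

lemma closed_zero:
  assumes "closed_games A" "G \<in> A" shows "0 \<in> A"
  using assms(2)
proof (induction "size G" arbitrary: G rule: less_induct)
  case less
  show ?case
  proof (cases "opts G = {||}")
    case True
    then have "G = 0" using zero_iff by blast
    then show ?thesis using less by simp
  next
    case False
    then obtain G' where "G' |\<in>| opts G" by blast
    moreover then have "G' \<in> A" using assms(1) less(2) unfolding closed_games_def by auto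
    ultimately show ?thesis using less opts_size_less by blast
  qed
qed

lemma equiv_cong:
  assumes cl: "closed_games A" and "G \<in> A" "G' \<in> A" "H \<in> A" "H' \<in> A"
    and "equiv_mod A G G'" "equiv_mod A H H'"
  shows "equiv_mod A (G + H) (G' + H')"
  unfolding equiv_mod_def
proof
  fix X assume X: "X \<in> A"
  have "H + X \<in> A" "G' + X \<in> A" using cl X assms unfolding closed_games_def by auto
  then have "misere_P (G + (H + X)) = misere_P (G' + (H + X))"
       "misere_P (H + (G' + X)) = misere_P (H' + (G' + X))"
    using assms unfolding equiv_mod_def by auto
  moreover have "G + H + X = G + (H + X)" by (rule gsum_assoc)
  moreover have "G' + (H + X) = H + (G' + X)"
    by (metis gsum_assoc gsum_comm[of G' H])
  moreover have "G' + H' + X = H' + (G' + X)"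
    by (metis gsum_assoc gsum_comm[of G' H'])
  ultimately show "misere_P (G + H + X) = misere_P (G' + H' + X)"
    by simp
qed

lemma class_eq_iff:
  assumes "G \<in> A" "H \<in> A"
  shows "(mq_class A G = mq_class A H) = equiv_mod A G H"
  using assms unfolding mq_class_def equiv_mod_def by (auto simp: set_eq_iff)

lemma class_mem: "G \<in> A \<Longrightarrow> G \<in> mq_class A G"
  unfolding mq_class_def equiv_mod_def by auto

lemma class_P:
  assumes cl: "closed_games A" and "G \<in> A" shows "(mq_class A G \<in> mq_P A) = misere_P G"
proof
  assume "mq_class A G \<in> mq_P A"
  then obtain H where "H \<in> A" "misere_P H" "mq_class A H = mq_class A G"
    unfolding mq_P_def by auto
  then have "equiv_mod A H G" using assms class_eq_iff by blast
  moreover have "0 \<in> A" using closed_zero[OF cl] \<open>H \<in> A\<close> by blast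
  ultimately show "misere_P G" using \<open>misere_P H\<close> unfolding equiv_mod_def by (metis gsum_0)
qed (use assms in \<open>auto simp: mq_P_def\<close>)

lemma P_iff_misere:
  assumes cl: "closed_games A"
    and h: "\<forall>G\<in>A. \<Phi> G \<in> P \<longleftrightarrow> (G \<noteq> 0 \<and> (\<forall>G'\<in>fset (opts G). \<Phi> G' \<notin> P))"
  shows "G \<in> A \<Longrightarrow> (\<Phi> G \<in> P) = misere_P G"
proof (induction "size G" arbitrary: G rule: less_induct)
  case less
  have "\<forall>G'\<in>fset (opts G). G' \<in> A" using cl less(2) unfolding closed_games_def by auto
  then have "\<forall>G'\<in>fset (opts G). (\<Phi> G' \<in> P) = misere_P G'" using less opts_size_less by auto
  then show ?case using h less(2) misere_P_eq[of G] by auto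
qed

theorem mainTheorem15:
  fixes A :: "game set" and P :: "('q::comm_monoid_add) set"
  assumes "closed_games A" and "reduced_bipartite P"
  shows "iso_to_mq P A \<longleftrightarrow>
    (\<exists>\<Phi> :: game \<Rightarrow> 'q.
        (\<forall>x. \<exists>G\<in>A. \<Phi> G = x) \<and>
        \<Phi> 0 = 0 \<and>
        (\<forall>G\<in>A. \<forall>H\<in>A. \<Phi> (G + H) = \<Phi> G + \<Phi> H) \<and>
        (\<forall>G\<in>A. \<Phi> G \<in> P \<longleftrightarrow> (G \<noteq> 0 \<and> (\<forall>G'\<in>fset (opts G). \<Phi> G' \<notin> P))))"
proof
  assume "iso_to_mq P A"
  then obtain f :: "'q \<Rightarrow> game set" where bij: "bij_betw f UNIV (mq_carrier A)"
    and f0: "f 0 = mq_one A" and fm: "\<And>x y. f (x + y) = mq_mult A (f x) (f y)"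
    and fP: "f ` P = mq_P A"
    unfolding iso_to_mq_def by blast
  have inj: "inj f" using bij unfolding bij_betw_def by blast
  define \<Phi> where "\<Phi> G = inv f (mq_class A G)" for G
  have f\<Phi>: "f (\<Phi> G) = mq_class A G" if "G \<in> A" for G
  proof -
    have "mq_class A G \<in> range f" using bij that unfolding bij_betw_def mq_carrier_def by auto
    then show ?thesis unfolding \<Phi>_def by (rule f_inv_into_f)
  qed
  have ne: "A \<noteq> {}" using bij unfolding bij_betw_def mq_carrier_def by auto
  then have zA: "0 \<in> A" using closed_zero[OF assms(1)] by blast
  have cl: "\<And>G H. G \<in> A \<Longrightarrow> H \<in> A \<Longrightarrow> G + H \<in> A"
    "\<And>G G'. G \<in> A \<Longrightarrow> G' \<in> fset (opts G) \<Longrightarrow> G' \<in> A"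
    using assms(1) unfolding closed_games_def by auto
  have mult: "mq_mult A (mq_class A G) (mq_class A H) = mq_class A (G + H)"
    if "G \<in> A" "H \<in> A" for G H
  proof -
    define G1 where "G1 = (SOME G1. G1 \<in> mq_class A G)"
    define H1 where "H1 = (SOME H1. H1 \<in> mq_class A H)"
    have "G1 \<in> mq_class A G" unfolding G1_def using class_mem[OF that(1)] by (rule someI)
    moreover have "H1 \<in> mq_class A H" unfolding H1_def using class_mem[OF that(2)] by (rule someI)
    ultimately have "G1 \<in> A" "H1 \<in> A" "equiv_mod A G G1" "equiv_mod A H H1"
      unfolding mq_class_def by auto
    then have "equiv_mod A (G + H) (G1 + H1)" using equiv_cong[OF assms(1)] that by blast
    then have "equiv_mod A (G1 + H1) (G + H)" unfolding equiv_mod_def by auto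
    then have "mq_class A (G1 + H1) = mq_class A (G + H)"
      using class_eq_iff[of "G1 + H1" A "G + H"] cl that \<open>G1 \<in> A\<close> \<open>H1 \<in> A\<close> by blast
    then show ?thesis unfolding mq_mult_def G1_def[symmetric] H1_def[symmetric] .
  qed
  show "\<exists>\<Phi> :: game \<Rightarrow> 'q.
        (\<forall>x. \<exists>G\<in>A. \<Phi> G = x) \<and>
        \<Phi> 0 = 0 \<and>
        (\<forall>G\<in>A. \<forall>H\<in>A. \<Phi> (G + H) = \<Phi> G + \<Phi> H) \<and>
        (\<forall>G\<in>A. \<Phi> G \<in> P \<longleftrightarrow> (G \<noteq> 0 \<and> (\<forall>G'\<in>fset (opts G). \<Phi> G' \<notin> P)))"
  proof (intro exI[of _ \<Phi>] conjI allI ballI)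
    fix x
    have "f x \<in> mq_carrier A" using bij unfolding bij_betw_def by blast
    then obtain G where G: "G \<in> A" "f x = mq_class A G" unfolding mq_carrier_def by auto
    then have "f (\<Phi> G) = f x" using f\<Phi> by simp
    then have "\<Phi> G = x" by (rule injD[OF inj])
    then show "\<exists>G\<in>A. \<Phi> G = x" using G(1) by blast
  next
    have "f (\<Phi> 0) = f 0" using f\<Phi>[OF zA] f0 unfolding mq_one_def by simp
    then show "\<Phi> 0 = 0" by (rule injD[OF inj])
  next
    fix G H assume "G \<in> A" "H \<in> A"
    then have "f (\<Phi> (G + H)) = f (\<Phi> G + \<Phi> H)"
      using fm[of "\<Phi> G" "\<Phi> H"] f\<Phi> mult cl by simp
    then show "\<Phi> (G + H) = \<Phi> G + \<Phi> H" by (rule injD[OF inj])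
  next
    have PP: "(\<Phi> G \<in> P) = misere_P G" if "G \<in> A" for G
    proof -
      have "(\<Phi> G \<in> P) = (f (\<Phi> G) \<in> f ` P)" using inj by (simp add: inj_image_mem_iff)
      then show ?thesis using fP f\<Phi>[OF that] class_P[OF assms(1) that] by simp
    qed
    fix G assume "G \<in> A"
    then show "(\<Phi> G \<in> P) = (G \<noteq> 0 \<and> (\<forall>G'\<in>fset (opts G). \<Phi> G' \<notin> P))"
      using PP cl(2) misere_P_eq[of G] by auto
  qed
next
  assume "\<exists>\<Phi> :: game \<Rightarrow> 'q.
        (\<forall>x. \<exists>G\<in>A. \<Phi> G = x) \<and>
        \<Phi> 0 = 0 \<and>
        (\<forall>G\<in>A. \<forall>H\<in>A. \<Phi> (G + H) = \<Phi> G + \<Phi> H) \<and>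
        (\<forall>G\<in>A. \<Phi> G \<in> P \<longleftrightarrow> (G \<noteq> 0 \<and> (\<forall>G'\<in>fset (opts G). \<Phi> G' \<notin> P)))"
  then obtain \<Phi> :: "game \<Rightarrow> 'q" where sur: "\<forall>x. \<exists>G\<in>A. \<Phi> G = x" and p0: "\<Phi> 0 = 0"
    and hom: "\<forall>G\<in>A. \<forall>H\<in>A. \<Phi> (G + H) = \<Phi> G + \<Phi> H"
    and pc: "\<forall>G\<in>A. \<Phi> G \<in> P \<longleftrightarrow> (G \<noteq> 0 \<and> (\<forall>G'\<in>fset (opts G). \<Phi> G' \<notin> P))"
    by blast
  have cl: "\<And>G H. G \<in> A \<Longrightarrow> H \<in> A \<Longrightarrow> G + H \<in> A"
    using assms(1) unfolding closed_games_def by auto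
  have PM: "\<And>G. G \<in> A \<Longrightarrow> (\<Phi> G \<in> P) = misere_P G"
    using P_iff_misere[OF assms(1) pc] by blast
  have zA: "0 \<in> A" using sur closed_zero[OF assms(1)] by blast
  have eqv: "(\<Phi> G = \<Phi> H) = equiv_mod A G H" if "G \<in> A" "H \<in> A" for G H
  proof
    assume "\<Phi> G = \<Phi> H"
    show "equiv_mod A G H" unfolding equiv_mod_def
    proof (intro ballI)
      fix X assume X: "X \<in> A"
      have "misere_P (G + X) = (\<Phi> G + \<Phi> X \<in> P)" using PM[of "G + X"] cl hom that X by simp
      moreover have "misere_P (H + X) = (\<Phi> H + \<Phi> X \<in> P)" using PM[of "H + X"] cl hom that X by simp
      ultimately show "misere_P (G + X) = misere_P (H + X)" using \<open>\<Phi> G = \<Phi> H\<close> by simp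
    qed
  next
    assume e: "equiv_mod A G H"
    show "\<Phi> G = \<Phi> H"
    proof (rule ccontr)
      assume "\<Phi> G \<noteq> \<Phi> H"
      then obtain z where z: "(\<Phi> G + z \<in> P) \<noteq> (\<Phi> H + z \<in> P)"
        using assms(2) unfolding reduced_bipartite_def by blast
      obtain X where X: "X \<in> A" "\<Phi> X = z" using sur by blast
      have "misere_P (G + X) = (\<Phi> G + z \<in> P)" using PM[of "G + X"] cl hom that X by simp
      moreover have "misere_P (H + X) = (\<Phi> H + z \<in> P)" using PM[of "H + X"] cl hom that X by simp
      ultimately show False using z e X unfolding equiv_mod_def by auto
    qed
  qed
  define g where "g x = (SOME G. G \<in> A \<and> \<Phi> G = x)" for x
  have g: "g x \<in> A \<and> \<Phi> (g x) = x" for x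
    unfolding g_def using sur by (metis (mono_tags, lifting) someI_ex)
  define f where "f x = mq_class A (g x)" for x
  have fG: "f (\<Phi> G) = mq_class A G" if "G \<in> A" for G
  proof -
    have "\<Phi> (g (\<Phi> G)) = \<Phi> G" "g (\<Phi> G) \<in> A" using g by auto
    then show ?thesis unfolding f_def using class_eq_iff eqv that by blast
  qed
  show "iso_to_mq P A" unfolding iso_to_mq_def
  proof (intro exI conjI allI)
    show "bij_betw f UNIV (mq_carrier A)"
      unfolding bij_betw_def
    proof
      show "inj f" unfolding inj_def
      proof (intro allI impI)
        fix x y assume "f x = f y"
        have gx: "g x \<in> A" "g y \<in> A" using g by auto
        have "equiv_mod A (g x) (g y)" using class_eq_iff[OF gx] \<open>f x = f y\<close> unfolding f_def by simp
        then have "\<Phi> (g x) = \<Phi> (g y)" using eqv[OF gx] by simp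
        then show "x = y" using g by simp
      qed
      show "range f = mq_carrier A" unfolding mq_carrier_def
      proof
        show "range f \<subseteq> mq_class A ` A" unfolding f_def using g by auto
        show "mq_class A ` A \<subseteq> range f" using fG by (auto intro!: image_eqI[where x="\<Phi> _"])
      qed
    qed
  next
    show "f 0 = mq_one A" unfolding mq_one_def using fG[OF zA] p0 by simp
  next
    fix x y
    define G where "G = (SOME G1. G1 \<in> f x)"
    define H where "H = (SOME H1. H1 \<in> f y)"
    have "g x \<in> f x" "g y \<in> f y" unfolding f_def using class_mem g by blast+
    then have "G \<in> f x" "H \<in> f y" unfolding G_def H_def by (auto intro: someI)
    then have "G \<in> A" "H \<in> A" "equiv_mod A (g x) G" "equiv_mod A (g y) H"
      unfolding f_def mq_class_def by auto
    then have "\<Phi> G = x" "\<Phi> H = y" using eqv g by (metis (no_types))+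
    then have "\<Phi> (G + H) = x + y" using hom \<open>G \<in> A\<close> \<open>H \<in> A\<close> by simp
    then have "f (x + y) = mq_class A (G + H)" using fG[of "G + H"] cl \<open>G \<in> A\<close> \<open>H \<in> A\<close> by simp
    then show "f (x + y) = mq_mult A (f x) (f y)"
      unfolding mq_mult_def G_def[symmetric] H_def[symmetric] .
  next
    show "f ` P = mq_P A" unfolding mq_P_def
    proof
      show "f ` P \<subseteq> mq_class A ` {G \<in> A. misere_P G}"
        unfolding f_def using g PM by fastforce
      show "mq_class A ` {G \<in> A. misere_P G} \<subseteq> f ` P"
        using fG PM by fastforce
    qed
  qed
qed

end
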